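(* Let $\varphi_0\in\mathbb{R}$ and let $v$ be a smooth function with $v(\varphi)>0$ and $v'(\varphi)>0$ for all $\varphi\ge\varphi_0$. Set $\mathfrak{v}(\varphi)=(\log\sqrt{v(\varphi)})'$ and $\mathfrak{R}_0=\{(\varphi,\mathfrak{h}):\varphi_0\le\varphi<\infty,\ 1\le\mathfrak{h}<\infty\}$. Let $\mathfrak{h}$ be the solution of $$\mathfrak{h}'=\sqrt{\mathfrak{h}^2-1}-\mathfrak{v}(\varphi)\,\mathfrak{h},\qquad \mathfrak{h}(\varphi_0)=\mathfrak{h}_0>1.$$ Then either (type A) $\mathfrak{h}$ leaves $\mathfrak{R}_0$ by reaching the boundary $\mathfrak{h}=1$ at some finite $\varphi_1>\varphi_0$, with slope $\mathfrak{h}'(\varphi_1)=-\mathfrak{v}(\varphi_1)<0$ there, or (type B) it exists and remains in $\mathfrak{R}_0$ for all $\varphi>\varphi_0$.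
   Context: The function $\mathfrak{h}=h/\sqrt{v}$ is the "modified Hubble parameter": $h$ solves $h'=\sqrt{h^2-v}$ on $\{h>\sqrt v\}$ if and only if $\mathfrak{h}=h/\sqrt v$ solves the displayed equation on $\{\mathfrak{h}>1\}$. *)

theory Defs
  imports "HOL-Analysis.Analysis"
begin

definition smooth_fun :: "(real \<Rightarrow> real) \<Rightarrow> bool" where
  "smooth_fun f \<longleftrightarrow> (\<forall>n x. ((deriv ^^ n) f) differentiable (at x))"

definition mod_v :: "(real \<Rightarrow> real) \<Rightarrow> real \<Rightarrow> real" where
  "mod_v v \<phi> = deriv (\<lambda>x. ln (sqrt (v x))) \<phi>"

definition solves_mod_eq :: "(real \<Rightarrow> real) \<Rightarrow> (real \<Rightarrow> real) \<Rightarrow> real set \<Rightarrow> bool" where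
  "solves_mod_eq v h S \<longleftrightarrow>
     (\<forall>\<phi>\<in>S. (h has_real_derivative (sqrt ((h \<phi>)\<^sup>2 - 1) - mod_v v \<phi> * h \<phi>)) (at \<phi> within S))"

end

theory Submission
  imports Defs
begin

primrec gs :: "(real \<Rightarrow> real) \<Rightarrow> real \<Rightarrow> real \<Rightarrow> nat \<Rightarrow> real \<Rightarrow> real" where
  "gs v a c 0 = (\<lambda>s. - sqrt (v s))"
| "gs v a c (Suc n) = (\<lambda>s. sqrt ((max (c + integral {a..s} (gs v a c n)) 0)\<^sup>2 - v s))"

lemma exp_integral:
  fixes a s c :: real
  assumes "a \<le> s"
  shows "integral {a..s} (\<lambda>u. c * exp (u - a)) = c * exp (s - a) - c"
proof -
  have "((\<lambda>u. c * exp (u - a)) has_integral (c * exp (s - a) - c * exp (a - a))) {a..s}"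
    apply (rule fundamental_theorem_of_calculus[OF assms])
    apply (subst has_real_derivative_iff_has_vector_derivative[symmetric])
    apply (auto intro!: derivative_eq_intros)
    done
  then have "((\<lambda>u. c * exp (u - a)) has_integral (c * exp (s - a) - c)) {a..s}" by simp
  then show ?thesis by (rule integral_unique)
qed

lemma gs_props:
  assumes vc: "continuous_on UNIV v" and vpos: "\<And>s. s \<ge> a \<Longrightarrow> v s \<ge> 0" and c: "c > 0"
  shows "(\<forall>b. continuous_on {a..b} (gs v a c n)) \<and>
         (\<forall>s\<ge>a. - sqrt (v s) \<le> gs v a c n s \<and> gs v a c n s \<le> c * exp (s - a))"
proof (induction n)
  case 0
  have "continuous_on {a..b} (\<lambda>s. - sqrt (v s))" for b
    by (intro continuous_intros continuous_on_subset[OF vc]) auto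
  moreover have "- sqrt (v s) \<le> c * exp (s - a)" if "s \<ge> a" for s
  proof -
    have "- sqrt (v s) \<le> 0" using vpos[OF that] by simp
    also have "0 \<le> c * exp (s - a)" using c by simp
    finally show ?thesis .
  qed
  ultimately show ?case by simp
next
  case (Suc n)
  let ?g = "gs v a c n"
  have cont: "continuous_on {a..b} ?g" for b using Suc by blast
  have "continuous_on {a..b} (gs v a c (Suc n))" for b
  proof -
    have "continuous_on {a..b} (\<lambda>s. integral {a..s} ?g)"
      by (rule indefinite_integral_continuous_1[OF integrable_continuous_interval[OF cont]])
    then show ?thesis
      by (simp, intro continuous_intros continuous_on_subset[OF vc]) auto
  qed
  moreover have "- sqrt (v s) \<le> gs v a c (Suc n) s \<and> gs v a c (Suc n) s \<le> c * exp (s - a)"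
    if s: "s \<ge> a" for s
  proof -
    define M where "M = max (c + integral {a..s} ?g) 0"
    have M0: "M \<ge> 0" by (simp add: M_def)
    have "integral {a..s} ?g \<le> integral {a..s} (\<lambda>u. c * exp (u - a))"
      apply (rule integral_le)
        apply (rule integrable_continuous_interval[OF cont])
       apply (rule integrable_continuous_interval, intro continuous_intros)
      using Suc by auto
    then have "c + integral {a..s} ?g \<le> c * exp (s - a)" using exp_integral[OF s, of c] by simp
    then have Mle: "M \<le> c * exp (s - a)" using c by (simp add: M_def)
    have "gs v a c (Suc n) s = sqrt (M\<^sup>2 - v s)" by (simp add: M_def)
    moreover have "sqrt (M\<^sup>2 - v s) \<ge> - sqrt (v s)"
    proof -
      have "sqrt (M\<^sup>2 - v s) \<ge> sqrt (- v s)" by (rule real_sqrt_le_mono) simp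
      then show ?thesis by (simp add: real_sqrt_minus)
    qed
    moreover have "sqrt (M\<^sup>2 - v s) \<le> M"
    proof -
      have "sqrt (M\<^sup>2 - v s) \<le> sqrt (M\<^sup>2)" by (rule real_sqrt_le_mono) (use vpos[OF s] in simp)
      then show ?thesis using M0 by simp
    qed
    ultimately show ?thesis using Mle by linarith
  qed
  ultimately show ?case by blast
qed

lemma gs_mono:
  assumes vc: "continuous_on UNIV v" and vpos: "\<And>s. s \<ge> a \<Longrightarrow> v s \<ge> 0" and c: "c > 0"
  shows "\<forall>s\<ge>a. gs v a c n s \<le> gs v a c (Suc n) s"
proof (induction n)
  case 0
  then show ?case using gs_props[of v a c "Suc 0", OF vc vpos c] by auto
next
  case (Suc n)
  show ?case
  proof (intro allI impI)
    fix s assume s: "s \<ge> a"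
    have "integral {a..s} (gs v a c n) \<le> integral {a..s} (gs v a c (Suc n))"
      apply (rule integral_le)
      using gs_props[of v a c n, OF vc vpos c] gs_props[of v a c "Suc n", OF vc vpos c] Suc s
      by (auto intro: integrable_continuous_interval simp del: gs.simps)
    then have "max (c + integral {a..s} (gs v a c n)) 0 \<le> max (c + integral {a..s} (gs v a c (Suc n))) 0"
      by simp
    then have "(max (c + integral {a..s} (gs v a c n)) 0)\<^sup>2 \<le> (max (c + integral {a..s} (gs v a c (Suc n))) 0)\<^sup>2"
      by (rule power_mono) simp
    then show "gs v a c (Suc n) s \<le> gs v a c (Suc (Suc n)) s"
      by (simp del: max.absorb1 max.absorb2 max_def)
  qed
qed

lemma exists_H:
  fixes v :: "real \<Rightarrow> real" and a c :: real
  assumes vc: "continuous_on UNIV v" and vpos: "\<And>s. s \<ge> a \<Longrightarrow> v s \<ge> 0" and c: "c > 0"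
  shows "\<exists>H. H a = c \<and> (\<forall>t\<ge>a. (H has_real_derivative sqrt ((max (H t) 0)\<^sup>2 - v t)) (at t within {a..}))"
proof -
  let ?g = "gs v a c"
  have cont: "continuous_on {a..b} (?g n)" for n b using gs_props[of v a c n, OF vc vpos c] by blast
  have bnd: "s \<ge> a \<Longrightarrow> - sqrt (v s) \<le> ?g n s \<and> ?g n s \<le> c * exp (s - a)" for n s
    using gs_props[of v a c n, OF vc vpos c] by blast
  have mono: "s \<ge> a \<Longrightarrow> ?g n s \<le> ?g (Suc n) s" for n s
    using gs_mono[of v a c n, OF vc vpos c] by blast
  have intg: "?g n integrable_on {a..t}" for n t by (rule integrable_continuous_interval[OF cont])
  have cintg: "(\<lambda>s. - sqrt (v s)) integrable_on {a..t}" for t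
    by (intro integrable_continuous_interval continuous_intros continuous_on_subset[OF vc]) auto
  have eintg: "(\<lambda>u. c * exp (u - a)) integrable_on {a..t}" for t
    by (intro integrable_continuous_interval continuous_intros)
  define H where "H t = (SUP n. c + integral {a..t} (?g n))" for t
  define G where "G s = sqrt ((max (H s) 0)\<^sup>2 - v s)" for s
  have lo: "integral {a..t} (\<lambda>s. - sqrt (v s)) \<le> integral {a..t} (?g n)" for t n
    by (rule integral_le[OF cintg intg]) (use bnd in auto)
  have hi: "integral {a..t} (?g n) \<le> c * exp (t - a) - c" if "t \<ge> a" for t n
  proof -
    have "integral {a..t} (?g n) \<le> integral {a..t} (\<lambda>u. c * exp (u - a))"
      by (rule integral_le[OF intg eintg]) (use bnd in auto)
    then show ?thesis using exp_integral[OF that] by simp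
  qed
  have lim: "(\<lambda>n. c + integral {a..t} (?g n)) \<longlonglongrightarrow> H t" if t: "t \<ge> a" for t
    unfolding H_def
  proof (rule LIMSEQ_incseq_SUP)
    show "bdd_above (range (\<lambda>n. c + integral {a..t} (?g n)))"
      using hi[OF t] by (intro bdd_aboveI[where M="c * exp (t - a)"]) (auto simp: algebra_simps)
    show "incseq (\<lambda>n. c + integral {a..t} (?g n))"
      by (rule incseq_SucI, rule add_left_mono, rule integral_le[OF intg intg], use mono in auto)
  qed
  have glim: "(\<lambda>n. ?g n s) \<longlonglongrightarrow> G s" if s: "s \<ge> a" for s
  proof -
    have "(\<lambda>n. ?g (Suc n) s) \<longlonglongrightarrow> G s"
      unfolding G_def gs.simps by (intro tendsto_intros lim[OF s])
    then show ?thesis by (rule LIMSEQ_imp_Suc)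
  qed
  have key: "G integrable_on {a..t} \<and> H t = c + integral {a..t} G" if t: "t \<ge> a" for t
  proof -
    have mct: "G integrable_on {a..t} \<and> (\<lambda>n. integral {a..t} (?g n)) \<longlonglongrightarrow> integral {a..t} G"
    proof (rule monotone_convergence_increasing)
      show "?g n integrable_on {a..t}" for n by (rule intg)
      show "x \<in> {a..t} \<Longrightarrow> ?g n x \<le> ?g (Suc n) x" for n x using mono by auto
      show "x \<in> {a..t} \<Longrightarrow> (\<lambda>n. ?g n x) \<longlonglongrightarrow> G x" for x using glim by auto
      have "range (\<lambda>n. integral {a..t} (?g n)) \<subseteq> {integral {a..t} (\<lambda>s. - sqrt (v s)) .. c * exp (t - a) - c}"
        using lo hi[OF t] by auto
      then show "bounded (range (\<lambda>n. integral {a..t} (?g n)))"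
        by (rule bounded_subset[OF bounded_closed_interval])
    qed
    then have "(\<lambda>n. c + integral {a..t} (?g n)) \<longlonglongrightarrow> c + integral {a..t} G"
      by (intro tendsto_intros) auto
    with lim[OF t] have "H t = c + integral {a..t} G" by (rule LIMSEQ_unique)
    with mct show ?thesis by simp
  qed
  have Ha: "H a = c" using key[of a] by simp
  have deriv: "(H has_real_derivative G t) (at t within {a..})" if t: "t \<ge> a" for t
  proof -
    define b where "b = t + 1"
    have ab: "a \<le> b" using t by (simp add: b_def)
    have Hcont: "continuous_on {a..b} H"
    proof -
      have "continuous_on {a..b} (\<lambda>x. c + integral {a..x} G)"
        using indefinite_integral_continuous_1[OF conjunct1[OF key[OF ab]]] by (intro continuous_intros)
      then show ?thesis by (rule continuous_on_cong[THEN iffD1, rotated 2]) (use key in auto)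
    qed
    have Gcont: "continuous_on {a..b} G"
      unfolding G_def by (intro continuous_intros Hcont continuous_on_subset[OF vc]) auto
    have "((\<lambda>x. c + integral {a..x} G) has_real_derivative G t) (at t within {a..b})"
      using integral_has_real_derivative[OF Gcont, of t] t by (auto simp: b_def intro!: derivative_eq_intros)
    then have "(H has_real_derivative G t) (at t within {a..b})"
      by (rule has_field_derivative_transform_within[where d=1]) (use t key in \<open>auto simp: b_def\<close>)
    moreover have "at t within {a..} = at t within {a..b}"
      by (rule at_within_nhd[where S="{..<b}"]) (auto simp: b_def)
    ultimately show ?thesis by simp
  qed
  show ?thesis using Ha deriv by (auto simp: G_def)
qed

lemma sqrt_ratio:
  fixes H w :: real assumes "w > 0"
  shows "sqrt (H\<^sup>2 - w) / sqrt w = sqrt ((H / sqrt w)\<^sup>2 - 1)"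
proof -
  have "(H / sqrt w)\<^sup>2 - 1 = (H\<^sup>2 - w) / w"
    using assms by (simp add: power_divide field_simps)
  then show ?thesis by (simp add: real_sqrt_divide)
qed

theorem proposition3:
  fixes v :: "real \<Rightarrow> real" and \<phi>\<^sub>0 h\<^sub>0 :: real
  assumes "smooth_fun v"
    and "\<And>\<phi>. \<phi> \<ge> \<phi>\<^sub>0 \<Longrightarrow> v \<phi> > 0"
    and "\<And>\<phi>. \<phi> \<ge> \<phi>\<^sub>0 \<Longrightarrow> deriv v \<phi> > 0"
    and "h\<^sub>0 > 1"
  shows "\<exists>h. h \<phi>\<^sub>0 = h\<^sub>0 \<and>
    ((\<exists>\<phi>\<^sub>1 > \<phi>\<^sub>0. solves_mod_eq v h {\<phi>\<^sub>0..\<phi>\<^sub>1}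
        \<and> (\<forall>\<phi>\<in>{\<phi>\<^sub>0..<\<phi>\<^sub>1}. h \<phi> > 1) \<and> h \<phi>\<^sub>1 = 1
        \<and> (h has_real_derivative (- mod_v v \<phi>\<^sub>1)) (at \<phi>\<^sub>1 within {\<phi>\<^sub>0..\<phi>\<^sub>1})
        \<and> - mod_v v \<phi>\<^sub>1 < 0)
     \<or> (solves_mod_eq v h {\<phi>\<^sub>0..} \<and> (\<forall>\<phi>\<ge>\<phi>\<^sub>0. h \<phi> \<ge> 1)))"
proof -
  note vpos = assms(2) and vd = assms(3)
  have vdiff: "(v has_real_derivative deriv v x) (at x)" for x
    using assms(1) unfolding smooth_fun_def
    by (metis DERIV_deriv_iff_real_differentiable funpow_0)
  have vc: "continuous_on UNIV v" by (rule has_real_derivative_imp_continuous_on[OF vdiff])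
  have c0: "h\<^sub>0 * sqrt (v \<phi>\<^sub>0) > 0" using assms(4) vpos[of \<phi>\<^sub>0] by simp
  obtain H where H0: "H \<phi>\<^sub>0 = h\<^sub>0 * sqrt (v \<phi>\<^sub>0)"
    and HD: "\<And>t. t \<ge> \<phi>\<^sub>0 \<Longrightarrow> (H has_real_derivative sqrt ((max (H t) 0)\<^sup>2 - v t)) (at t within {\<phi>\<^sub>0..})"
    using exists_H[of v \<phi>\<^sub>0 "h\<^sub>0 * sqrt (v \<phi>\<^sub>0)", OF vc _ c0] vpos by (auto simp: less_imp_le)
  define h where "h t = H t / sqrt (v t)" for t
  have hphi0: "h \<phi>\<^sub>0 = h\<^sub>0" using vpos[of \<phi>\<^sub>0] by (simp add: h_def H0)
  have modv: "mod_v v t = deriv v t / (2 * v t)" if t: "t \<ge> \<phi>\<^sub>0" for t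
  proof -
    have "((\<lambda>x. ln (sqrt (v x))) has_real_derivative deriv v t / (2 * v t)) (at t)"
      using vpos[OF t] by (auto intro!: derivative_eq_intros vdiff simp: field_simps)
    then show ?thesis unfolding mod_v_def by (rule DERIV_imp_deriv)
  qed
  have hD: "(h has_real_derivative (sqrt ((max (H t) 0)\<^sup>2 - v t) / sqrt (v t) - mod_v v t * h t)) (at t within {\<phi>\<^sub>0..})"
    if t: "t \<ge> \<phi>\<^sub>0" for t
  proof -
    have vt: "v t > 0" using vpos[OF t] .
    have sd: "((\<lambda>x. sqrt (v x)) has_real_derivative (inverse (sqrt (v t)) / 2 * deriv v t)) (at t within {\<phi>\<^sub>0..})"
      by (rule DERIV_chain2[OF DERIV_real_sqrt[OF vt] has_field_derivative_at_within[OF vdiff]])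
    have "((\<lambda>x. H x / sqrt (v x)) has_real_derivative
       (sqrt ((max (H t) 0)\<^sup>2 - v t) * sqrt (v t) - H t * (inverse (sqrt (v t)) / 2 * deriv v t)) / (sqrt (v t) * sqrt (v t)))
       (at t within {\<phi>\<^sub>0..})"
      by (rule DERIV_divide[OF HD[OF t] sd]) (use vt in simp)
    moreover have "(sqrt ((max (H t) 0)\<^sup>2 - v t) * sqrt (v t) - H t * (inverse (sqrt (v t)) / 2 * deriv v t)) / (sqrt (v t) * sqrt (v t))
      = sqrt ((max (H t) 0)\<^sup>2 - v t) / sqrt (v t) - deriv v t / (2 * v t) * (H t / sqrt (v t))"
      using vt by (simp add: field_simps)
    ultimately show ?thesis unfolding h_def modv[OF t] by simp
  qed
  have hcont: "continuous_on {\<phi>\<^sub>0..} h"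
    by (rule DERIV_continuous_on[OF hD]) auto
  have hsol: "(h has_real_derivative (sqrt ((h t)\<^sup>2 - 1) - mod_v v t * h t)) (at t within {\<phi>\<^sub>0..})"
    if t: "t \<ge> \<phi>\<^sub>0" and h1: "h t \<ge> 1" for t
  proof -
    have vt: "v t > 0" using vpos[OF t] .
    have "sqrt (v t) \<le> H t" using h1 vt by (simp add: h_def le_divide_eq)
    moreover have "sqrt (v t) > 0" using vt by simp
    ultimately have "H t > 0" by linarith
    then have "sqrt ((max (H t) 0)\<^sup>2 - v t) / sqrt (v t) = sqrt ((h t)\<^sup>2 - 1)"
      using sqrt_ratio[OF vt, of "H t"] by (simp add: h_def)
    then show ?thesis using hD[OF t] by simp
  qed
  show ?thesis
  proof (cases "\<forall>t\<ge>\<phi>\<^sub>0. h t \<ge> 1")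
    case True
    then have "solves_mod_eq v h {\<phi>\<^sub>0..}" unfolding solves_mod_eq_def using hsol by auto
    then show ?thesis using True hphi0 by blast
  next
    case False
    then obtain t0 where t0: "t0 \<ge> \<phi>\<^sub>0" "h t0 < 1" by auto
    define P where "P = {\<phi>\<^sub>0..} \<inter> h -` {..1}"
    define \<phi>1 where "\<phi>1 = Inf P"
    have Pne: "P \<noteq> {}" using t0 by (auto simp: P_def)
    have Pbdd: "bdd_below P" by (auto simp: P_def intro: bdd_belowI[where m="\<phi>\<^sub>0"])
    have Pcl: "closed P" unfolding P_def by (rule continuous_closed_preimage[OF hcont]) auto
    have inP: "\<phi>1 \<in> P" unfolding \<phi>1_def by (rule closed_contains_Inf[OF Pne Pbdd Pcl])
    then have p1ge: "\<phi>1 \<ge> \<phi>\<^sub>0" and hp1: "h \<phi>1 \<le> 1" by (auto simp: P_def)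
    have p1gt: "\<phi>1 > \<phi>\<^sub>0" using p1ge hp1 hphi0 assms(4) by (cases "\<phi>1 = \<phi>\<^sub>0") auto
    have before: "h t > 1" if "t \<in> {\<phi>\<^sub>0..<\<phi>1}" for t
    proof (rule ccontr)
      assume "\<not> h t > 1"
      then have "t \<in> P" using that by (auto simp: P_def)
      then have "\<phi>1 \<le> t" unfolding \<phi>1_def by (rule cInf_lower[OF _ Pbdd])
      then show False using that by auto
    qed
    have hp1eq: "h \<phi>1 = 1"
    proof (rule ccontr)
      assume "h \<phi>1 \<noteq> 1"
      then have lt: "h \<phi>1 < 1" using hp1 by simp
      have "continuous_on {\<phi>\<^sub>0..\<phi>1} h" by (rule continuous_on_subset[OF hcont]) auto
      then obtain x where x: "\<phi>\<^sub>0 \<le> x" "x \<le> \<phi>1" "h x = 1"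
        using IVT2'[of h \<phi>1 1 \<phi>\<^sub>0] lt hphi0 assms(4) p1ge by auto
      then have "x \<noteq> \<phi>1" using lt by auto
      then show False using before[of x] x by auto
    qed
    have ge1: "h t \<ge> 1" if "t \<in> {\<phi>\<^sub>0..\<phi>1}" for t
      using before[of t] hp1eq that by (cases "t = \<phi>1") auto
    have sol: "solves_mod_eq v h {\<phi>\<^sub>0..\<phi>1}"
      unfolding solves_mod_eq_def
    proof
      fix t assume t: "t \<in> {\<phi>\<^sub>0..\<phi>1}"
      then have "t \<ge> \<phi>\<^sub>0" by simp
      from hsol[OF this ge1[OF t]] show "(h has_real_derivative (sqrt ((h t)\<^sup>2 - 1) - mod_v v t * h t)) (at t within {\<phi>\<^sub>0..\<phi>1})"
        by (rule DERIV_subset) auto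
    qed
    have dend: "(h has_real_derivative (- mod_v v \<phi>1)) (at \<phi>1 within {\<phi>\<^sub>0..\<phi>1})"
      using sol p1ge unfolding solves_mod_eq_def by (auto dest!: bspec[of _ _ \<phi>1] simp: hp1eq)
    have "mod_v v \<phi>1 > 0" using modv[OF p1ge] vpos[OF p1ge] vd[OF p1ge] by simp
    then show ?thesis using p1gt sol before hp1eq dend hphi0 by (intro exI[of _ h]) auto
  qed
qed

end
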